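(* For all $t\ge 2$, in $\mathbb{F}_2[w_2,w_3]$ one has \[ r_{2^{t-1}-2}=q_{2^t-4},\qquad w_3r_{2^{t-1}-4}=q_{2^t-5},\qquad r_{2^{t-1}-1}=q_{2^t-2}. \]
   Context: In $\mathbb{F}_2[w_2,w_3]$: $q_0=1$, $q_m=0$ for $m<0$, $q_m=w_2q_{m-2}+w_3q_{m-3}$ for $m\ge1$; $r_0=1$, $r_m=0$ for $m<0$, $r_{m+1}=w_2r_m+w_3^2r_{m-2}$ for $m\ge0$. *)

theory Defs
  imports "HOL-Library.Z2" "HOL-Computational_Algebra.Polynomial"
begin

text \<open>F_2[w2,w3] is modelled as (F_2[w2])[w3] = bit poly poly:
  w2 is the constant (in w3) polynomial X, w3 is the outer indeterminate.\<close>

type_synonym F2w = "bit poly poly"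

definition w2 :: F2w where "w2 = [:[:0, 1:]:]"
definition w3 :: F2w where "w3 = [:0, 1:]"

function q :: "int \<Rightarrow> F2w" where
  "q m = (if m < 0 then 0 else if m = 0 then 1
          else w2 * q (m - 2) + w3 * q (m - 3))"
  by auto
termination by (relation "measure nat") auto

function r :: "int \<Rightarrow> F2w" where
  "r m = (if m < 0 then 0 else if m = 0 then 1
          else w2 * r (m - 1) + w3 ^ 2 * r (m - 3))"
  by auto
termination by (relation "measure nat") auto

declare q.simps[simp del] r.simps[simp del]

end

theory Submission
  imports Defs
begin

lemma bit_add_self: "(x::bit) + x = 0" by (cases x) auto

lemma bitpoly_add_self: "(x::bit poly) + x = 0"
  by (rule poly_eqI) (simp only: coeff_add bit_add_self coeff_0)

lemma F2w_add_self: "(x::F2w) + x = 0"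
  by (rule poly_eqI) (simp only: coeff_add bitpoly_add_self coeff_0)

lemma F2w_two: "(2::F2w) = 0"
proof -
  have "(1::F2w) + 1 = 0" by (rule F2w_add_self)
  thus ?thesis by (simp only: one_add_one)
qed

lemma F2w_two_mult: "2 * (x::F2w) = 0" by (simp add: F2w_two)

lemma F2w_sq_add: "((x::F2w) + y)^2 = x^2 + y^2"
proof -
  have "(x + y)^2 = x^2 + y^2 + 2 * (x*y)" by (simp add: power2_eq_square algebra_simps)
  thus ?thesis by (simp add: F2w_two_mult)
qed

lemma q_neg: "m < 0 \<Longrightarrow> q m = 0" by (subst q.simps) simp
lemma r_neg: "m < 0 \<Longrightarrow> r m = 0" by (subst r.simps) simp

lemma q0: "q 0 = 1" by (subst q.simps) simp
lemma r0: "r 0 = 1" by (subst r.simps) simp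

definition sq :: "int \<Rightarrow> F2w" where "sq m = (if even m then q (m div 2)^2 else 0)"
definition sr :: "int \<Rightarrow> F2w" where "sr m = (if even m then r (m div 2)^2 else 0)"

lemma sq_neg: "m < 0 \<Longrightarrow> sq m = 0" by (simp add: sq_def q_neg)
lemma sr_neg: "m < 0 \<Longrightarrow> sr m = 0" by (simp add: sr_def r_neg)

lemma q_sq_rec: "n > 0 \<Longrightarrow> q n ^2 = w2^2 * q (n-2)^2 + w3^2 * q (n-3)^2"
  by (subst q.simps) (simp add: F2w_sq_add power_mult_distrib)

lemma r_sq_rec: "n > 0 \<Longrightarrow> r n ^2 = w2^2 * r (n-1)^2 + (w3^2)^2 * r (n-3)^2"
  by (subst r.simps) (simp add: F2w_sq_add power_mult_distrib)

lemma sq_rec: "m > 0 \<Longrightarrow> sq m = w2^2 * sq (m-4) + w3^2 * sq (m-6)"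
proof (cases "even m")
  case True
  then obtain n where n: "m = 2*n" by auto
  assume "m > 0"
  hence "n > 0" using n by simp
  have a: "(2*n-4) div 2 = n - 2" "(2*n-6) div 2 = n - 3" by auto
  have b: "even (2*n-4)" "even (2*n-6)" by auto
  show ?thesis unfolding sq_def using n a b q_sq_rec[OF \<open>n>0\<close>] by simp
next
  case False
  hence "odd (m-4)" "odd (m-6)" by auto
  thus ?thesis using False by (simp add: sq_def)
qed

lemma sr_rec: "m > 0 \<Longrightarrow> sr m = w2^2 * sr (m-2) + (w3^2)^2 * sr (m-6)"
proof (cases "even m")
  case True
  then obtain n where n: "m = 2*n" by auto
  assume "m > 0"
  hence "n > 0" using n by simp
  have a: "(2*n-2) div 2 = n - 1" "(2*n-6) div 2 = n - 3" by auto
  have b: "even (2*n-2)" "even (2*n-6)" by auto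
  show ?thesis unfolding sr_def using n a b r_sq_rec[OF \<open>n>0\<close>] by simp
next
  case False
  hence "odd (m-2)" "odd (m-6)" by auto
  thus ?thesis using False by (simp add: sr_def)
qed

lemma q_formula: "q m = sq m + w2 * sq (m-2) + w3 * sq (m-3)"
proof (induction m rule: q.induct)
  case (1 m)
  show ?case
  proof (cases "m < 0")
    case True thus ?thesis by (simp add: q_neg sq_neg)
  next
    case f: False
    show ?thesis
    proof (cases "m = 0")
      case True thus ?thesis by (simp add: sq_neg sq_def q0 q_neg)
    next
      case False
      hence mp: "m > 0" using f by simp
      have "q m = w2 * q (m-2) + w3 * q (m-3)" using f False by (subst q.simps) simp
      also have "\<dots> = w2 * (sq (m-2) + w2 * sq (m-4) + w3 * sq (m-5))
                     + w3 * (sq (m-3) + w2 * sq (m-5) + w3 * sq (m-6))"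
        using 1 f False by (simp add: algebra_simps)
      also have "\<dots> = (w2^2 * sq (m-4) + w3^2 * sq (m-6)) + w2 * sq (m-2) + w3 * sq (m-3)
                     + 2 * (w2 * w3 * sq (m-5))"
        by (simp add: algebra_simps power2_eq_square)
      also have "\<dots> = sq m + w2 * sq (m-2) + w3 * sq (m-3)"
        using sq_rec[OF mp] by (simp add: F2w_two_mult)
      finally show ?thesis .
    qed
  qed
qed

lemma r_formula: "r m = sr m + w2 * sr (m-1) + w3^2 * sr (m-3)"
proof (induction m rule: r.induct)
  case (1 m)
  show ?case
  proof (cases "m < 0")
    case True thus ?thesis by (simp add: r_neg sr_neg)
  next
    case f: False
    show ?thesis
    proof (cases "m = 0")
      case True thus ?thesis by (simp add: sr_neg sr_def r0 r_neg)
    next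
      case False
      hence mp: "m > 0" using f by simp
      have "r m = w2 * r (m-1) + w3^2 * r (m-3)" using f False by (subst r.simps) simp
      also have "\<dots> = w2 * (sr (m-1) + w2 * sr (m-2) + w3^2 * sr (m-4))
                     + w3^2 * (sr (m-3) + w2 * sr (m-4) + w3^2 * sr (m-6))"
        using 1 f False by (simp add: algebra_simps)
      also have "\<dots> = (w2^2 * sr (m-2) + (w3^2)^2 * sr (m-6)) + w2 * sr (m-1) + w3^2 * sr (m-3)
                     + 2 * (w2 * w3^2 * sr (m-4))"
        by (simp add: algebra_simps power2_eq_square)
      also have "\<dots> = sr m + w2 * sr (m-1) + w3^2 * sr (m-3)"
        using sr_rec[OF mp] by (simp add: F2w_two_mult)
      finally show ?thesis .
    qed
  qed
qed

lemma q_even: "q (2*n) = q n ^2 + w2 * q (n-1)^2"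
proof -
  have "sq (2*n) = q n^2" "sq (2*n-2) = q (n-1)^2" "sq (2*n-3) = 0"
    unfolding sq_def by auto
  thus ?thesis using q_formula[of "2*n"] by simp
qed

lemma q_odd3: "q (2*n+3) = w3 * q n ^2"
proof -
  have "sq (2*n+3) = 0" "sq (2*n+3-2) = 0" "sq (2*n+3-3) = q n^2"
    unfolding sq_def by auto
  thus ?thesis using q_formula[of "2*n+3"] by simp
qed

lemma r_even: "r (2*n) = r n ^2"
proof -
  have "sr (2*n) = r n^2" "sr (2*n-1) = 0" "sr (2*n-3) = 0"
    unfolding sr_def by auto
  thus ?thesis using r_formula[of "2*n"] by simp
qed

lemma r_odd: "r (2*n+1) = w2 * r n ^2 + w3^2 * r (n-1)^2"
proof -
  have "sr (2*n+1) = 0" "sr (2*n+1-1) = r n^2" "sr (2*n+1-3) = r (n-1)^2"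
    unfolding sr_def by auto
  thus ?thesis using r_formula[of "2*n+1"] by simp
qed

lemma q_zero: "k \<ge> 1 \<Longrightarrow> q (2^k - 3) = 0"
proof (induction k rule: nat_induct_at_least)
  case base thus ?case by (simp add: q_neg)
next
  case (Suc k)
  have "(2::int)^Suc k - 3 = 2 * (2^k - 3) + 3" by simp
  thus ?case using q_odd3[of "2^k-3"] Suc.IH by simp
qed

lemma main_aux: "r (2^(s+1) - 2) = q (2^(s+2) - 4)
       \<and> w3 * r (2^(s+1) - 4) = q (2^(s+2) - 5)
       \<and> r (2^(s+1) - 1) = q (2^(s+2) - 2)"
proof (induction s)
  case 0
  have "r 1 = w2" by (subst r.simps) (simp add: r0 r_neg)
  moreover have "q 2 = w2" by (subst q.simps) (simp add: q0 q_neg)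
  ultimately show ?case by (simp add: r0 q0 r_neg q_neg)
next
  case (Suc s)
  define M :: int where "M = 2^(s+1)"
  have N: "(2::int)^(Suc s + 1) = 2*M" "(2::int)^(Suc s + 2) = 4*M" unfolding M_def by simp_all
  have IH: "r (M-2) = q (2*M-4)" "r (M-1) = q (2*M-2)"
    using Suc.IH unfolding M_def by simp_all
  have z1: "q (M-3) = 0" unfolding M_def by (rule q_zero) simp
  have z2: "q (2*M-3) = 0" using q_zero[of "s+2"] unfolding M_def by simp
  have B: "w3 * r (2*M-4) = q (4*M-5)"
  proof -
    have "r (2*M-4) = r (M-2)^2" using r_even[of "M-2"] by (simp add: algebra_simps)
    moreover have "q (4*M-5) = w3 * q (2*M-4)^2" using q_odd3[of "2*M-4"] by (simp add: algebra_simps)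
    ultimately show ?thesis using IH by simp
  qed
  have A: "r (2*M-2) = q (4*M-4)"
  proof -
    have "r (2*M-2) = r (M-1)^2" using r_even[of "M-1"] by (simp add: algebra_simps)
    moreover have "q (4*M-4) = q (2*M-2)^2 + w2 * q (2*M-3)^2"
      using q_even[of "2*M-2"] by (simp add: algebra_simps)
    ultimately show ?thesis using IH z2 by simp
  qed
  have C: "r (2*M-1) = q (4*M-2)"
  proof -
    have "r (2*M-1) = w2 * r (M-1)^2 + w3^2 * r (M-2)^2"
      using r_odd[of "M-1"] by (simp add: algebra_simps)
    moreover have "q (4*M-2) = q (2*M-1)^2 + w2 * q (2*M-2)^2"
      using q_even[of "2*M-1"] by (simp add: algebra_simps)
    moreover have "q (2*M-1) = w3 * q (M-2)^2"
      using q_odd3[of "M-2"] by (simp add: algebra_simps)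
    moreover have "q (2*M-4) = q (M-2)^2"
      using q_even[of "M-2"] z1 by (simp add: algebra_simps)
    ultimately show ?thesis using IH by (simp add: power_mult_distrib algebra_simps)
  qed
  show ?case unfolding N using A B C by simp
qed

theorem mainTheorem16:
  fixes t :: nat
  assumes "t \<ge> 2"
  shows "r (2 ^ (t - 1) - 2) = q (2 ^ t - 4)
       \<and> w3 * r (2 ^ (t - 1) - 4) = q (2 ^ t - 5)
       \<and> r (2 ^ (t - 1) - 1) = q (2 ^ t - 2)"
proof -
  obtain s where s: "t = s + 2" using assms by (metis add.commute le_Suc_ex)
  have "t - 1 = s + 1" using s by simp
  thus ?thesis using main_aux[of s] s by simp
qed

end
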